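(* Let $\mu$ be a non-trivial continuous (atomless) positive measure on $\mathbb T$, singular with respect to Lebesgue measure, supported by a closed set $E\subset\mathbb T$ of finite entropy. Then for any $\varepsilon,\delta>0$ there exists an arc $I$ such that $0<\mu(I)<\delta$ and $\operatorname{Ent}_I(E)/\mu(I)<\varepsilon$.
   Context: $m$ is normalized Lebesgue measure on $\mathbb T$, and $|J|=m(J)$ for an arc $J$. A closed set $E\subset\mathbb T$ with $m(E)=0$ has finite entropy if $\sum_\ell |I_\ell|\log\frac1{|I_\ell|}<\infty$, where $\mathbb T\setminus E=\bigsqcup_\ell I_\ell$ with disjoint open arcs $I_\ell$ (equivalently $\int_{\mathbb T}\log\operatorname{dist}(\zeta,E)\,dm(\zeta)>-\infty$). For an arc $I$, the local entropy is $\operatorname{Ent}_I(E)=\sum_\ell |I_\ell|\log\frac{1}{|I_\ell|}$, where $I_\ell$ are the disjoint open arcs with $I\setminus E=\bigsqcup_\ell I_\ell$. *)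

theory Defs
  imports "HOL-Analysis.Analysis"
begin

definition circle :: "complex set" where
  "circle = sphere 0 1"

definition nmeas :: "complex set \<Rightarrow> real" where
  "nmeas A = measure lebesgue {t \<in> {0..<2*pi}. cis t \<in> A} / (2*pi)"

definition open_arc :: "real \<Rightarrow> real \<Rightarrow> complex set" where
  "open_arc a l = {cis t | t. a < t \<and> t < a + l}"

definition local_entropy :: "complex set \<Rightarrow> complex set \<Rightarrow> ennreal" where
  "local_entropy I E =
     (\<Sum>\<^sub>\<infinity> C \<in> components (I - E). ennreal (nmeas C * ln (1 / nmeas C)))"

definition finite_entropy :: "complex set \<Rightarrow> bool" where
  "finite_entropy E \<longleftrightarrow> closed E \<and> E \<subseteq> circle \<and> nmeas E = 0
      \<and> local_entropy circle E < \<infinity>"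

end

theory Submission
  imports Defs "HOL-Probability.Probability"
begin


definition ang :: "complex \<Rightarrow> real" where
  "ang z = (if Im z \<ge> 0 then arccos (max (-1) (min 1 (Re z)))
            else 2*pi - arccos (max (-1) (min 1 (Re z))))"

lemma ang_cis: assumes "0 \<le> t" "t < 2*pi" shows "ang (cis t) = t"
proof (cases "t \<le> pi")
  case True
  then have "sin t \<ge> 0" using assms by (simp add: sin_ge_zero)
  then show ?thesis using True assms by (simp add: ang_def arccos_cos)
next
  case False
  then have "sin t < 0" using assms by (intro sin_lt_zero) auto
  moreover have "cos t = cos (2*pi - t)" by simp
  moreover have "arccos (cos (2*pi - t)) = 2*pi - t" using False assms by (intro arccos_cos) auto
  ultimately show ?thesis by (simp add: ang_def)
qed

lemma ang_circle: assumes "cmod z = 1" shows "cis (ang z) = z" "0 \<le> ang z" "ang z < 2*pi"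
proof -
  have re: "-1 \<le> Re z" "Re z \<le> 1" using assms abs_Re_le_cmod[of z] by auto
  have sq: "(Re z)^2 + (Im z)^2 = 1" using assms by (simp add: cmod_def)
  define c where "c = arccos (Re z)"
  have c: "0 \<le> c" "c \<le> pi" "cos c = Re z" using re by (auto simp: c_def arccos_lbound arccos_ubound)
  have s: "sin c = sqrt (1 - (Re z)^2)" using re by (simp add: c_def sin_arccos)
  have im: "sqrt (1 - (Re z)^2) = \<bar>Im z\<bar>" using sq by (metis add_diff_cancel_left' real_sqrt_abs)
  have a: "ang z = (if Im z \<ge> 0 then c else 2*pi - c)" using re by (simp add: ang_def c_def)
  show "cis (ang z) = z"
    using a c s im by (auto intro!: complex_eqI simp: cis.ctr)
  show "0 \<le> ang z" using a c by auto
  have "Im z < 0 \<Longrightarrow> c > 0"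
  proof (rule ccontr)
    assume "Im z < 0" "\<not> c > 0" then have "c = 0" using c by auto
    then have "Re z = 1" using c by auto
    then show False using sq \<open>Im z < 0\<close> by auto
  qed
  then show "ang z < 2*pi"
  proof (cases "Im z \<ge> 0")
    case True
    then have "ang z = c" using a by simp
    then show ?thesis using c pi_gt_zero by linarith
  next
    case False
    then have "ang z = 2*pi - c" "c > 0" using a \<open>Im z < 0 \<Longrightarrow> c > 0\<close> by auto
    then show ?thesis by linarith
  qed
qed

lemma inner_cis: "inner (cis c) (cis t) = cos (t - c)"
  by (simp add: inner_complex_def cos_diff)

lemma open_arc_circle: "open_arc a l \<subseteq> circle"
  by (auto simp: open_arc_def circle_def)

lemma arc_char:
  assumes l: "0 < l" "l < 2*pi" and z: "cmod z = 1"
  shows "z \<in> open_arc a l \<longleftrightarrow> inner (cis (a + l/2)) z > cos (l/2)"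
    and "inner (cis (a + l/2)) z = cos (l/2) \<Longrightarrow> z = cis a \<or> z = cis (a+l)"
proof -
  define c where "c = a + l/2"
  define w where "w = z * cis (-c)"
  have w1: "cmod w = 1" using z by (simp add: w_def norm_mult)
  then have "w \<noteq> 0" by auto
  define s where "s = Arg w"
  have s: "- pi < s" "s \<le> pi" using Arg_bounded s_def by auto
  have "cis s = w" using cis_Arg[OF \<open>w \<noteq> 0\<close>] w1 by (simp add: s_def sgn_div_norm)
  have "cis (s + c) = cis s * cis c" by (simp add: cis_mult)
  also have "\<dots> = z * (cis (-c) * cis c)" using \<open>cis s = w\<close> by (simp add: w_def)
  also have "cis (-c) * cis c = 1" by (simp add: cis_mult)
  finally have zs: "z = cis (s + c)" by simp
  have inz: "inner (cis c) z = cos s" by (simp add: zs inner_cis)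
  have h: "0 < l/2" "l/2 < pi" using l by auto
  show "z \<in> open_arc a l \<longleftrightarrow> inner (cis (a + l/2)) z > cos (l/2)"
  proof
    assume "z \<in> open_arc a l"
    then obtain t where t: "a < t" "t < a + l" "z = cis t" by (auto simp: open_arc_def)
    have "t - c < l/2" "-(l/2) < t - c" using t by (simp_all add: c_def)
    then have tc: "\<bar>t - c\<bar> < l/2" unfolding abs_less_iff by linarith
    have "cos (l/2) < cos \<bar>t - c\<bar>"
      using tc h by (subst cos_mono_less_eq) auto
    then show "inner (cis (a + l/2)) z > cos (l/2)"
      using t by (simp add: inner_cis c_def[symmetric])
  next
    assume "inner (cis (a + l/2)) z > cos (l/2)"
    then have "cos (l/2) < cos \<bar>s\<bar>" using inz by (simp add: c_def)
    then have "\<bar>s\<bar> < l/2" using h s by (subst (asm) cos_mono_less_eq) auto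
    then show "z \<in> open_arc a l" using zs unfolding open_arc_def c_def
      by (intro CollectI exI[of _ "s + (a + l/2)"]) auto
  qed
  assume "inner (cis (a + l/2)) z = cos (l/2)"
  then have eq: "cos \<bar>s\<bar> = cos (l/2)" using inz by (simp add: c_def)
  have sle: "\<bar>s\<bar> \<le> pi" using s by auto
  have "\<bar>s\<bar> = l/2" by (rule cos_inj_pi[OF abs_ge_zero sle _ _ eq]) (use h in auto)
  then have "s = l/2 \<or> s = - (l/2)" by auto
  then show "z = cis a \<or> z = cis (a+l)"
  proof
    assume "s = l/2" then have "s + c = a + l" by (simp add: c_def)
    then show ?thesis using zs by simp
  next
    assume "s = -(l/2)" then have "s + c = a" by (simp add: c_def)
    then show ?thesis using zs by simp
  qed
qed

lemma comp_arc:
  assumes Ec: "E \<subseteq> circle" and l: "0 < l" "l < 2*pi"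
    and ea: "cis a \<in> E" and eb: "cis (a+l) \<in> E"
    and C: "C \<in> components (open_arc a l - E)"
  shows "C \<in> components (circle - E)"
proof -
  have Cne: "C \<noteq> {}" and Csub: "C \<subseteq> open_arc a l - E" and Ccon: "connected C"
    using in_components_nonempty[OF C] in_components_subset[OF C] in_components_connected[OF C]
    by auto
  then obtain x where x: "x \<in> C" by auto
  have xa: "x \<in> open_arc a l" using x Csub by auto
  then have "x \<in> circle" using open_arc_circle by blast
  then have "cmod x = 1" by (simp add: circle_def)
  then have xin: "inner (cis (a + l/2)) x > cos (l/2)"
    using arc_char(1)[OF l, of x a] xa by auto
  show ?thesis
    unfolding in_components_maximal
  proof (intro conjI allI impI)
    show "C \<noteq> {}" "connected C" by fact+
    show "C \<subseteq> circle - E" using Csub open_arc_circle by auto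
    fix D assume D: "D \<noteq> {} \<and> C \<subseteq> D \<and> D \<subseteq> circle - E \<and> connected D"
    have "D \<subseteq> open_arc a l"
    proof
      fix y assume y: "y \<in> D"
      have ycm: "cmod y = 1" using y D by (auto simp: circle_def)
      show "y \<in> open_arc a l"
      proof (rule ccontr)
        assume "y \<notin> open_arc a l"
        then have "inner (cis (a + l/2)) y \<le> cos (l/2)" using arc_char(1)[OF l ycm] by auto
        moreover have "x \<in> D" using x D by auto
        ultimately obtain z where z: "z \<in> D" "inner (cis (a + l/2)) z = cos (l/2)"
          using connected_ivt_hyperplane[of D y x "cis (a + l/2)" "cos (l/2)"] D y xin by auto
        have "cmod z = 1" using z D by (auto simp: circle_def)
        then have "z = cis a \<or> z = cis (a+l)" using arc_char(2)[OF l] z by auto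
        then show False using z D ea eb by auto
      qed
    qed
    then have "D \<subseteq> open_arc a l - E" using D by auto
    then show "D = C" using C D unfolding in_components_maximal by blast
  qed
qed



lemma ang_measurable: "ang \<in> borel_measurable borel"
proof -
  define g where "g = (\<lambda>z::complex. arccos (max (-1) (min 1 (Re z))))"
  have gc: "continuous_on UNIV g" unfolding g_def
    by (intro continuous_intros) auto
  have gm: "g \<in> borel_measurable borel" by (rule borel_measurable_continuous_onI[OF gc])
  have hm: "(\<lambda>z. 2*pi - g z) \<in> borel_measurable borel" using gm by measurable
  have s: "{x \<in> space borel. 0 \<le> Im (x::complex)} \<in> sets borel"
  proof -
    have "closed {x::complex. 0 \<le> Im x}" by (simp add: closed_halfspace_Im_ge)
    then show ?thesis by auto
  qed
  have "(\<lambda>z. if 0 \<le> Im z then g z else 2*pi - g z) \<in> borel_measurable borel"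
    by (rule measurable_If[OF gm hm s])
  moreover have "ang = (\<lambda>z. if 0 \<le> Im z then g z else 2*pi - g z)"
    by (auto simp: ang_def g_def fun_eq_iff)
  ultimately show ?thesis by simp
qed

lemma ang_preimage: "ang -` A \<inter> circle = cis ` (A \<inter> {0..<2*pi})"
proof
  show "ang -` A \<inter> circle \<subseteq> cis ` (A \<inter> {0..<2*pi})"
  proof
    fix z assume z: "z \<in> ang -` A \<inter> circle"
    then have "cmod z = 1" by (simp add: circle_def)
    from ang_circle[OF this] z show "z \<in> cis ` (A \<inter> {0..<2*pi})"
      by (intro image_eqI[of _ _ "ang z"]) auto
  qed
  show "cis ` (A \<inter> {0..<2*pi}) \<subseteq> ang -` A \<inter> circle"
    by (auto simp: ang_cis circle_def)
qed

lemma open_arc_image: "open_arc a l = cis ` {a<..<a+l}"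
  by (auto simp: open_arc_def)

locale msetup =
  fixes mu :: "complex measure"
  assumes sets_mu: "sets mu = sets borel"
    and fin: "finite_measure mu"
    and null: "emeasure mu (UNIV - circle) = 0"
    and atom: "\<And>x. emeasure mu {x} = 0"
begin

interpretation mu: finite_measure mu by (rule fin)

lemma space_mu: "space mu = UNIV"
  using sets_eq_imp_space_eq[OF sets_mu] by simp

lemma ang_mu: "ang \<in> borel_measurable mu"
  using ang_measurable measurable_cong_sets[OF sets_mu refl] by blast

definition nu where "nu = distr mu borel ang"

lemma nu_fbm: "finite_borel_measure nu"
proof -
  have "finite_measure nu" unfolding nu_def by (rule mu.finite_measure_distr[OF ang_mu])
  moreover have "sets nu = sets borel" by (simp add: nu_def)
  ultimately show ?thesis by (simp add: finite_borel_measure_def finite_borel_measure_axioms_def)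
qed

interpretation nu: finite_borel_measure nu by (rule nu_fbm)

lemma circle_borel: "circle \<in> sets borel"
  by (simp add: circle_def)

lemma mu_circle: "X \<in> sets borel \<Longrightarrow> measure mu X = measure mu (X \<inter> circle)"
proof -
  assume X: "X \<in> sets borel"
  have n: "UNIV - circle \<in> null_sets mu"
    using null circle_borel sets_mu by (auto simp: null_sets_def)
  have "X \<inter> circle = X - (UNIV - circle)" by auto
  then show ?thesis using measure_Diff_null_set[of X mu "UNIV - circle"] X n sets_mu by simp
qed

lemma nu_eq: assumes A: "A \<in> sets borel"
  shows "measure nu A = measure mu (cis ` (A \<inter> {0..<2*pi}))"
    and "cis ` (A \<inter> {0..<2*pi}) \<in> sets borel"
proof -
  have pm: "ang -` A \<in> sets borel"
    using measurable_sets[OF ang_measurable A] by simp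
  have "measure nu A = measure mu (ang -` A)"
    unfolding nu_def using measure_distr[OF ang_mu A] space_mu by simp
  also have "\<dots> = measure mu (ang -` A \<inter> circle)" using mu_circle[OF pm] .
  finally show "measure nu A = measure mu (cis ` (A \<inter> {0..<2*pi}))" by (simp add: ang_preimage)
  show "cis ` (A \<inter> {0..<2*pi}) \<in> sets borel"
    using pm circle_borel by (simp flip: ang_preimage)
qed

lemma mu_atom: "measure mu {x} = 0"
  using atom by (simp add: measure_def)

lemma nu_atom: "measure nu {x} = 0"
proof -
  have "measure nu {x} = measure mu (cis ` ({x} \<inter> {0..<2*pi}))" by (rule nu_eq) simp
  moreover have "cis ` ({x} \<inter> {0..<2*pi}) = {} \<or> cis ` ({x} \<inter> {0..<2*pi}) = {cis x}"
    by (cases "x \<in> {0..<2*pi}") auto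
  ultimately show ?thesis using mu_atom[of "cis x"] by (metis measure_empty)
qed

lemma nu_arc: assumes "0 \<le> a" "a + l \<le> 2*pi"
  shows "measure mu (open_arc a l) = measure nu {a<..<a+l}"
    and "open_arc a l \<in> sets borel"
proof -
  have "{a<..<a+l} \<inter> {0..<2*pi} = {a<..<a+l}" using assms by auto
  then show "measure mu (open_arc a l) = measure nu {a<..<a+l}" "open_arc a l \<in> sets borel"
    using nu_eq[of "{a<..<a+l}"] by (simp_all add: open_arc_image)
qed

lemma nu_Ioo: assumes "a < b" shows "measure nu {a<..<b} = cdf nu b - cdf nu a"
proof -
  have "{a<..b} = {a<..<b} \<union> {b}" using assms by auto
  moreover have "measure nu ({a<..<b} \<union> {b}) = measure nu {a<..<b} + measure nu {b}"
    by (intro nu.finite_measure_Union) (auto intro!: nu.sets_M)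
  ultimately have "measure nu {a<..b} = measure nu {a<..<b} + measure nu {b}" by simp
  then show ?thesis using nu.cdf_diff_eq[OF assms] nu_atom by simp
qed

lemma cdf_cont: "isCont (cdf nu) x"
  using nu.isCont_cdf nu_atom by simp

lemma cdf_0: "cdf nu 0 = 0"
proof -
  have "measure nu {..0} = measure mu (cis ` ({..0} \<inter> {0..<2*pi}))" by (rule nu_eq) simp
  also have "{..0} \<inter> {0..<2*pi} = {0::real}" by auto
  finally show ?thesis using mu_atom by (simp add: cdf_def)
qed

lemma cdf_2pi: "cdf nu (2*pi) = measure mu UNIV"
proof -
  have "measure nu {..2*pi} = measure mu (cis ` ({..2*pi} \<inter> {0..<2*pi}))" by (rule nu_eq) simp
  also have "{..2*pi} \<inter> {0..<2*pi} = UNIV \<inter> {0..<2*pi}" by auto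
  also have "measure mu (cis ` (UNIV \<inter> {0..<2*pi})) = measure nu UNIV"
    by (rule nu_eq(1)[symmetric]) simp
  also have "measure nu UNIV = measure mu UNIV"
    unfolding nu_def using measure_distr[OF ang_mu, of UNIV] space_mu by simp
  finally show ?thesis by (simp add: cdf_def)
qed

end



lemma ens[simp]: "(h::'a \<Rightarrow> ennreal) summable_on A"
  by (rule nonneg_summable_on_complete) simp

lemma tail_ennreal:
  fixes h :: "'a \<Rightarrow> ennreal"
  assumes fin: "infsum h A < \<top>" and eta: "0 < \<eta>"
  shows "\<exists>F. finite F \<and> F \<subseteq> A \<and> infsum h (A - F) < \<eta>"
proof (cases "infsum h A < \<eta>")
  case True then show ?thesis by (intro exI[of _ "{}"]) auto
next
  case False
  define S where "S = infsum h A"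
  have hs: "(h has_sum S) A" unfolding S_def by (rule has_sum_infsum) (rule nonneg_summable_on_complete, simp)
  have eS: "\<eta> \<le> S" "S < \<top>" using False fin by (auto simp: S_def)
  then have et: "\<eta> < \<top>" by auto
  have "S + 0 < S + \<eta>" using eS eta by (subst ennreal_add_left_cancel_less) auto
  then have lt: "S - \<eta> < S" using minus_less_iff_ennreal[OF et eS(1)] by simp
  have "\<forall>\<^sub>F F in finite_subsets_at_top A. S - \<eta> < sum h F"
    using hs lt unfolding has_sum_def by (rule order_tendstoD(1))
  then obtain F where F: "finite F" "F \<subseteq> A" "S - \<eta> < sum h F"
    unfolding eventually_finite_subsets_at_top by auto
  have "infsum h (F \<union> (A - F)) = infsum h F + infsum h (A - F)"
    by (rule infsum_Un_disjoint) auto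
  moreover have "F \<union> (A - F) = A" using F by auto
  ultimately have eq: "S = sum h F + infsum h (A - F)" using F by (simp add: S_def)
  have Sfin: "S < \<top>" using fin by (simp add: S_def)
  have "S < sum h F + \<eta>" using F(3) minus_less_iff_ennreal[OF et eS(1)] by simp
  then have "sum h F + infsum h (A - F) < sum h F + \<eta>" using eq by simp
  then have "infsum h (A - F) < \<eta>" by (simp add: ennreal_add_left_cancel_less)
  then show ?thesis using F by auto
qed



lemma cis_disj:
  assumes "I \<inter> J = {}" "I \<subseteq> {0..<2*pi}" "J \<subseteq> {0..<2*pi}"
  shows "cis ` I \<inter> cis ` J = {}"
proof (rule ccontr)
  assume "cis ` I \<inter> cis ` J \<noteq> {}"
  then obtain s t where st: "s \<in> I" "t \<in> J" "cis s = cis t" by auto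
  have "s \<in> {0..<2*pi}" "t \<in> {0..<2*pi}" using st assms by auto
  then have "ang (cis s) = s" "ang (cis t) = t" by (auto intro!: ang_cis)
  then have "s = t" using st by metis
  then show False using st assms by auto
qed

locale msetup2 = msetup +
  fixes E :: "complex set"
  assumes Ecirc: "E \<subseteq> circle" and Ecl: "closed E"
    and supp: "emeasure mu (UNIV - E) = 0"
begin

lemma mu_null:
  assumes X: "X \<in> sets borel" and sub: "X \<subseteq> (UNIV - E) \<union> {u, v}"
  shows "measure mu X = 0"
proof -
  have s1: "UNIV - E \<in> sets mu" using Ecl sets_mu by auto
  have n: "{x} \<in> null_sets mu" for x using atom sets_mu by (auto simp: null_sets_def)
  have s2: "(UNIV - E) \<union> {u} \<in> sets mu" using s1 sets_mu by auto
  have "emeasure mu X \<le> emeasure mu ((UNIV - E) \<union> {u} \<union> {v})"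
    using sub X sets_mu s2 by (intro emeasure_mono) auto
  also have "\<dots> = emeasure mu ((UNIV - E) \<union> {u})" by (rule emeasure_Un_null_set[OF s2 n])
  also have "\<dots> = emeasure mu (UNIV - E)" by (rule emeasure_Un_null_set[OF s1 n])
  finally have "emeasure mu X = 0" using supp by simp
  then show ?thesis by (simp add: measure_def)
qed

lemma shrink:
  assumes pq: "0 \<le> p" "p < q" "q \<le> 2*pi"
  shows "\<exists>\<alpha> \<beta>. p \<le> \<alpha> \<and> \<alpha> \<le> \<beta> \<and> \<beta> \<le> q \<and> measure nu {\<alpha><..<\<beta>} = measure nu {p<..<q}
           \<and> (\<alpha> < \<beta> \<longrightarrow> cis \<alpha> \<in> E \<and> cis \<beta> \<in> E)"
proof -
  interpret nu: finite_borel_measure nu by (rule nu_fbm)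
  define K where "K = {p..q} \<inter> cis -` E"
  have cc: "continuous_on UNIV (\<lambda>t::real. cis t)" by (intro continuous_intros)
  then have "\<And>x. continuous (at x) cis" by (simp add: continuous_on_eq_continuous_at)
  then have cK: "closed K" unfolding K_def
    by (intro closed_Int closed_atLeastAtMost continuous_closed_vimage Ecl)
  have bK: "bdd_below K" "bdd_above K" unfolding K_def by (auto intro: bdd_belowI2 bdd_aboveI2)
  show ?thesis
  proof (cases "K = {}")
    case True
    have "cis ` ({p<..<q} \<inter> {0..<2*pi}) \<subseteq> (UNIV - E) \<union> {0, 0}"
    proof
      fix z assume "z \<in> cis ` ({p<..<q} \<inter> {0..<2*pi})"
      then obtain t where t: "p < t" "t < q" "z = cis t" by auto
      then have "t \<notin> K" using True by auto
      then show "z \<in> (UNIV - E) \<union> {0, 0}" using t by (auto simp: K_def)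
    qed
    then have "measure mu (cis ` ({p<..<q} \<inter> {0..<2*pi})) = 0"
      by (intro mu_null nu_eq(2)) auto
    then have "measure nu {p<..<q} = 0" using nu_eq(1)[of "{p<..<q}"] by simp
    then show ?thesis using pq by (intro exI[of _ p]) auto
  next
    case False
    define \<alpha> where "\<alpha> = Inf K"
    define \<beta> where "\<beta> = Sup K"
    have aK: "\<alpha> \<in> K" unfolding \<alpha>_def by (rule closed_contains_Inf[OF False bK(1) cK])
    have bK': "\<beta> \<in> K" unfolding \<beta>_def by (rule closed_contains_Sup[OF False bK(2) cK])
    have lo: "\<alpha> \<le> t" "t \<le> \<beta>" if "t \<in> K" for t
      using that bK unfolding \<alpha>_def \<beta>_def by (auto intro: cInf_lower cSup_upper)
    have ab: "\<alpha> \<le> \<beta>" using lo(2)[OF aK] .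
    define D where "D = {p<..<q} - {\<alpha><..<\<beta>}"
    have "cis ` (D \<inter> {0..<2*pi}) \<subseteq> (UNIV - E) \<union> {cis \<alpha>, cis \<beta>}"
    proof
      fix z assume "z \<in> cis ` (D \<inter> {0..<2*pi})"
      then obtain t where t: "t \<in> D" "z = cis t" by auto
      show "z \<in> (UNIV - E) \<union> {cis \<alpha>, cis \<beta>}"
      proof (cases "cis t \<in> E")
        case True
        then have "t \<in> K" using t by (auto simp: K_def D_def)
        then have "\<alpha> \<le> t" "t \<le> \<beta>" using lo by auto
        then have "t = \<alpha> \<or> t = \<beta>" using t by (auto simp: D_def)
        then show ?thesis using t by auto
      qed (use t in auto)
    qed
    moreover have "D \<in> sets borel" by (simp add: D_def)
    ultimately have "measure mu (cis ` (D \<inter> {0..<2*pi})) = 0"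
      by (intro mu_null nu_eq(2))
    then have D0: "measure nu D = 0" using nu_eq(1)[of D] \<open>D \<in> sets borel\<close> by simp
    have sub: "{\<alpha><..<\<beta>} \<subseteq> {p<..<q}" using aK bK' by (auto simp: K_def)
    have "measure nu ({\<alpha><..<\<beta>} \<union> D) = measure nu {\<alpha><..<\<beta>} + measure nu D"
      by (intro nu.finite_measure_Union) (auto simp: D_def intro!: nu.sets_M)
    moreover have "{\<alpha><..<\<beta>} \<union> D = {p<..<q}" using sub by (auto simp: D_def)
    ultimately have "measure nu {\<alpha><..<\<beta>} = measure nu {p<..<q}" using D0 by simp
    then show ?thesis using aK bK' ab by (intro exI[of _ \<alpha>] exI[of _ \<beta>]) (auto simp: K_def)
  qed
qed

end



context msetup2
begin

lemma main:
  assumes ent: "local_entropy circle E < \<top>"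
    and Mpos: "measure mu UNIV > 0" and eps: "\<epsilon> > 0" and del: "\<delta> > 0"
  shows "\<exists>a l. 0 < l \<and> l < 2 * pi \<and>
           0 < measure mu (open_arc a l) \<and> measure mu (open_arc a l) < \<delta> \<and>
           local_entropy (open_arc a l) E < ennreal (\<epsilon> * measure mu (open_arc a l))"
proof -
  interpret nu: finite_borel_measure nu by (rule nu_fbm)
  define M where "M = measure mu UNIV"
  have M: "M > 0" using Mpos by (simp add: M_def)
  define comps where "comps = components (circle - E)"
  define h where "h = (\<lambda>C. ennreal (nmeas C * ln (1 / nmeas C)))"
  have Sfin: "infsum h comps < \<top>" using ent by (simp add: local_entropy_def h_def comps_def)
  have eta: "0 < ennreal (\<epsilon> * M / 2)" using M eps by simp
  obtain F where F: "finite F" "F \<subseteq> comps" "infsum h (comps - F) < ennreal (\<epsilon> * M / 2)"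
    using tail_ennreal[OF Sfin eta] by blast
  define d' where "d' = min \<delta> (M / (2 * (real (card F) + 1)))"
  have d'pos: "d' > 0" using del M by (simp add: d'_def)
  have uc: "uniformly_continuous_on {0..2*pi} (cdf nu)"
    by (intro compact_uniformly_continuous continuous_at_imp_continuous_on ballI cdf_cont) simp
  obtain d where d: "d > 0" "\<And>x x'. x \<in> {0..2*pi} \<Longrightarrow> x' \<in> {0..2*pi} \<Longrightarrow> dist x' x < d
      \<Longrightarrow> dist (cdf nu x') (cdf nu x) < d'"
  proof -
    from uc d'pos obtain d where "d > 0" "\<forall>x\<in>{0..2*pi}. \<forall>x'\<in>{0..2*pi}. dist x' x < d
        \<longrightarrow> dist (cdf nu x') (cdf nu x) < d'"
      unfolding uniformly_continuous_on_def by blast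
    then show ?thesis using that by blast
  qed
  obtain n :: nat where n: "2*pi/d < real n" using reals_Archimedean2 by blast
  define N where "N = n + 2"
  have N2: "N \<ge> 2" by (simp add: N_def)
  have Nd: "2*pi / real N < d"
  proof -
    have "2*pi/d < real N" using n by (simp add: N_def)
    then have "2*pi < real N * d" using d(1) by (simp add: field_simps)
    then show ?thesis using N2 d(1) by (simp add: field_simps)
  qed
  define p where "p = (\<lambda>k::nat. 2*pi*real k / real N)"
  have Npos: "real N > 0" using N2 by simp
  have pmono: "p k \<le> p k'" if "k \<le> k'" for k k'
    using that Npos by (auto simp: p_def divide_right_mono)
  have p0: "p 0 = 0" and pN: "p N = 2*pi" using Npos by (auto simp: p_def)
  have pdiff: "p (Suc k) - p k = 2*pi / real N" for k
    using Npos by (simp add: p_def field_simps)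
  have plt: "p k < p (Suc k)" for k
  proof -
    have "2*pi/real N > 0" using Npos by simp
    then show ?thesis using pdiff[of k] by linarith
  qed
  have prange: "0 \<le> p k" "p (Suc k) \<le> 2*pi" if "k < N" for k
    using pmono[of 0 k] pmono[of "Suc k" N] that p0 pN by auto
  define m where "m = (\<lambda>k. measure nu {p k<..<p (Suc k)})"
  have m_cdf: "m k = cdf nu (p (Suc k)) - cdf nu (p k)" for k
    unfolding m_def by (rule nu_Ioo[OF plt])
  have m_nn: "m k \<ge> 0" for k by (simp add: m_def)
  have m_lt: "m k < d'" if "k < N" for k
  proof -
    have i1: "p k \<in> {0..2*pi}" "p (Suc k) \<in> {0..2*pi}" using prange[OF that] plt[of k] by auto
    have "dist (p (Suc k)) (p k) < d" using pdiff[of k] Nd plt[of k] by (simp add: dist_real_def)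
    then have "dist (cdf nu (p (Suc k))) (cdf nu (p k)) < d'" by (rule d(2)[OF i1(1) i1(2)])
    then show ?thesis using m_cdf[of k] m_nn[of k] by (simp add: dist_real_def)
  qed
  have m_sum: "(\<Sum>k<N. m k) = M"
    using sum_lessThan_telescope[of "\<lambda>k. cdf nu (p k)" N] p0 pN cdf_0 cdf_2pi
    by (simp add: m_cdf M_def)
  have ex: "\<forall>k. \<exists>x. k < N \<longrightarrow> (p k \<le> fst x \<and> fst x \<le> snd x \<and> snd x \<le> p (Suc k)
      \<and> measure nu {fst x<..<snd x} = m k \<and> (fst x < snd x \<longrightarrow> cis (fst x) \<in> E \<and> cis (snd x) \<in> E))"
  proof (intro allI)
    fix k
    show "\<exists>x. k < N \<longrightarrow> (p k \<le> fst x \<and> fst x \<le> snd x \<and> snd x \<le> p (Suc k)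
      \<and> measure nu {fst x<..<snd x} = m k \<and> (fst x < snd x \<longrightarrow> cis (fst x) \<in> E \<and> cis (snd x) \<in> E))"
    proof (cases "k < N")
      case True
      obtain \<alpha> \<beta> where "p k \<le> \<alpha> \<and> \<alpha> \<le> \<beta> \<and> \<beta> \<le> p (Suc k) \<and> measure nu {\<alpha><..<\<beta>} = m k
           \<and> (\<alpha> < \<beta> \<longrightarrow> cis \<alpha> \<in> E \<and> cis \<beta> \<in> E)"
        using shrink[OF prange(1)[OF True] plt prange(2)[OF True]] unfolding m_def by blast
      then show ?thesis by (intro exI[of _ "(\<alpha>, \<beta>)"]) simp
    qed simp
  qed
  obtain ab where ab: "\<And>k. k < N \<Longrightarrow> p k \<le> fst (ab k) \<and> fst (ab k) \<le> snd (ab k) \<and> snd (ab k) \<le> p (Suc k)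
      \<and> measure nu {fst (ab k)<..<snd (ab k)} = m k
      \<and> (fst (ab k) < snd (ab k) \<longrightarrow> cis (fst (ab k)) \<in> E \<and> cis (snd (ab k)) \<in> E)"
    using choice[OF ex] by blast
  define \<alpha> where "\<alpha> = (\<lambda>k. fst (ab k))"
  define \<beta> where "\<beta> = (\<lambda>k. snd (ab k))"
  define A where "A = (\<lambda>k. open_arc (\<alpha> k) (\<beta> k - \<alpha> k))"
  have abk: "p k \<le> \<alpha> k" "\<alpha> k \<le> \<beta> k" "\<beta> k \<le> p (Suc k)" "measure nu {\<alpha> k<..<\<beta> k} = m k"
     "\<alpha> k < \<beta> k \<Longrightarrow> cis (\<alpha> k) \<in> E \<and> cis (\<beta> k) \<in> E" if "k < N" for k
    using ab[OF that] by (auto simp: \<alpha>_def \<beta>_def)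
  have mA: "measure mu (A k) = m k" if "k < N" for k
  proof -
    have "0 \<le> \<alpha> k" "\<alpha> k + (\<beta> k - \<alpha> k) \<le> 2*pi" using abk[OF that] prange[OF that] by auto
    from nu_arc(1)[OF this] show ?thesis using abk(4)[OF that] by (simp add: A_def)
  qed
  have Asub: "A k \<subseteq> cis ` {p k<..<p (Suc k)}" if "k < N" for k
    using abk[OF that] by (auto simp: A_def open_arc_image)
  have Adisj: "A k \<inter> A k' = {}" if "k < N" "k' < N" "k \<noteq> k'" for k k'
  proof -
    have "{p k<..<p (Suc k)} \<inter> {p k'<..<p (Suc k')} = {}"
    proof (cases "k < k'")
      case True then have "p (Suc k) \<le> p k'" using pmono by auto
      then show ?thesis by auto
    next
      case False then have "k' < k" using that by auto
      then have "p (Suc k') \<le> p k" using pmono by auto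
      then show ?thesis by auto
    qed
    moreover have "{p j<..<p (Suc j)} \<subseteq> {0..<2*pi}" if "j < N" for j
      using prange[OF that] by auto
    ultimately have "cis ` {p k<..<p (Suc k)} \<inter> cis ` {p k'<..<p (Suc k')} = {}"
      using that by (intro cis_disj) auto
    then show ?thesis using Asub[OF that(1)] Asub[OF that(2)] by blast
  qed
  have compdisj: "components (A k - E) \<inter> components (A k' - E) = {}"
    if "k < N" "k' < N" "k \<noteq> k'" for k k'
  proof (rule ccontr)
    assume "components (A k - E) \<inter> components (A k' - E) \<noteq> {}"
    then obtain C where C: "C \<in> components (A k - E)" "C \<in> components (A k' - E)" by auto
    then have "C \<subseteq> A k" "C \<subseteq> A k'" "C \<noteq> {}"
      using in_components_subset in_components_nonempty by blast+
    then show False using Adisj[OF that] by blast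
  qed
  define B where "B = {k\<in>{..<N}. components (A k - E) \<inter> F \<noteq> {}}"
  have cardB: "card B \<le> card F"
  proof -
    define f where "f = (\<lambda>k. SOME C. C \<in> components (A k - E) \<inter> F)"
    have fB: "f k \<in> components (A k - E) \<inter> F" if "k \<in> B" for k
    proof -
      have "\<exists>C. C \<in> components (A k - E) \<inter> F" using that by (auto simp: B_def)
      then show ?thesis unfolding f_def by (rule someI_ex)
    qed
    have "inj_on f B"
    proof (rule inj_onI)
      fix k k' assume kk: "k \<in> B" "k' \<in> B" "f k = f k'"
      show "k = k'"
      proof (rule ccontr)
        assume "k \<noteq> k'"
        moreover have "k < N" "k' < N" using kk by (auto simp: B_def)
        ultimately show False using compdisj[of k k'] fB[OF kk(1)] fB[OF kk(2)] kk(3) by auto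
      qed
    qed
    moreover have "f ` B \<subseteq> F" using fB by auto
    ultimately show ?thesis using card_inj_on_le F(1) by blast
  qed
  have finB: "finite B" by (simp add: B_def)
  have sumB: "(\<Sum>k\<in>B. m k) < M / 2"
  proof -
    have "(\<Sum>k\<in>B. m k) \<le> (\<Sum>k\<in>B. d')"
      using m_lt by (intro sum_mono) (auto simp: B_def less_imp_le)
    also have "\<dots> = real (card B) * d'" by simp
    also have "\<dots> \<le> real (card F) * d'" using cardB d'pos by (simp add: mult_right_mono)
    also have "\<dots> \<le> real (card F) * (M / (2 * (real (card F) + 1)))"
      by (intro mult_left_mono) (auto simp: d'_def)
    also have "\<dots> < M / 2"
    proof -
      have "real (card F) / (real (card F) + 1) < 1" by simp
      then have "real (card F) / (real (card F) + 1) * (M/2) < 1 * (M/2)" using M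
        by (intro mult_strict_right_mono) auto
      then show ?thesis by (simp add: field_simps)
    qed
    finally show ?thesis .
  qed
  define G where "G = {k \<in> {..<N} - B. m k > 0}"
  have finG: "finite G" by (simp add: G_def)
  have sumG: "(\<Sum>k\<in>G. m k) > M / 2"
  proof -
    have "(\<Sum>k<N. m k) = (\<Sum>k\<in>B. m k) + (\<Sum>k\<in>{..<N} - B. m k)"
      by (subst sum.subset_diff[of B "{..<N}"]) (auto simp: B_def)
    moreover have "(\<Sum>k\<in>{..<N} - B. m k) = (\<Sum>k\<in>G. m k)"
      using m_nn by (intro sum.mono_neutral_right) (auto simp: G_def less_le)
    ultimately show ?thesis using sumB m_sum by simp
  qed
  have Gprops: "k < N" "k \<notin> B" "\<alpha> k < \<beta> k" "cis (\<alpha> k) \<in> E" "cis (\<beta> k) \<in> E"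
    "0 < \<beta> k - \<alpha> k" "\<beta> k - \<alpha> k < 2*pi" "m k > 0" if "k \<in> G" for k
  proof -
    show kN: "k < N" "k \<notin> B" "m k > 0" using that by (auto simp: G_def)
    show ab: "\<alpha> k < \<beta> k"
    proof (rule ccontr)
      assume "\<not> \<alpha> k < \<beta> k"
      then have "{\<alpha> k<..<\<beta> k} = {}" by auto
      then show False using abk(4)[OF kN(1)] kN(3) by simp
    qed
    then show "cis (\<alpha> k) \<in> E" "cis (\<beta> k) \<in> E" using abk(5)[OF kN(1)] by auto
    show "0 < \<beta> k - \<alpha> k" using ab by simp
    have "\<beta> k - \<alpha> k \<le> 2*pi / real N" using abk[OF kN(1)] pdiff[of k] by linarith
    also have "\<dots> \<le> pi" using N2 by (simp add: field_simps)
    finally show "\<beta> k - \<alpha> k < 2*pi" using pi_gt_zero by linarith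
  qed
  have compsG: "components (A k - E) \<subseteq> comps - F" if "k \<in> G" for k
  proof
    fix C assume C: "C \<in> components (A k - E)"
    have "C \<in> comps" unfolding comps_def
      using comp_arc[OF Ecirc Gprops(6,7)[OF that] Gprops(4)[OF that], of C] Gprops(5)[OF that] C
      by (simp add: A_def)
    moreover have "C \<notin> F" using C Gprops(1,2)[OF that] by (auto simp: B_def)
    ultimately show "C \<in> comps - F" by simp
  qed
  show ?thesis
  proof (rule ccontr)
    assume H: "\<not> ?thesis"
    have Hk: "ennreal (\<epsilon> * m k) \<le> local_entropy (A k) E" if "k \<in> G" for k
    proof (rule ccontr)
      assume "\<not> ennreal (\<epsilon> * m k) \<le> local_entropy (A k) E"
      then have lt: "local_entropy (A k) E < ennreal (\<epsilon> * measure mu (A k))"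
        using mA Gprops(1)[OF that] by (simp add: not_le)
      have "0 < measure mu (A k)" "measure mu (A k) < \<delta>"
        using mA Gprops(1,8)[OF that] m_lt[OF Gprops(1)[OF that]] by (auto simp: d'_def)
      then show False using H lt Gprops(6,7)[OF that] unfolding A_def by blast
    qed
    have "ennreal (\<epsilon> * M / 2) \<le> ennreal (\<epsilon> * (\<Sum>k\<in>G. m k))"
      using sumG eps by (intro ennreal_leI) simp
    also have "\<dots> = (\<Sum>k\<in>G. ennreal (\<epsilon> * m k))"
      using eps m_nn by (simp add: sum_distrib_left)
    also have "\<dots> \<le> (\<Sum>k\<in>G. local_entropy (A k) E)" using Hk by (rule sum_mono)
    also have "\<dots> = (\<Sum>k\<in>G. infsum h (components (A k - E)))"
      by (simp add: local_entropy_def h_def)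
    also have "\<dots> = infsum h (\<Union>k\<in>G. components (A k - E))"
      using finG compdisj by (intro sum_infsum) (auto simp: G_def)
    also have "\<dots> \<le> infsum h (comps - F)"
      using compsG by (intro infsum_mono_neutral) auto
    also have "\<dots> < ennreal (\<epsilon> * M / 2)" by (rule F(3))
    finally show False by simp
  qed
qed

end


theorem lemma2p2:
  fixes \<mu> :: "complex measure" and E :: "complex set" and \<epsilon> \<delta> :: real
  assumes sets_mu: "sets \<mu> = sets borel"
    and finite: "finite_measure \<mu>"
    and nontrivial: "emeasure \<mu> UNIV > 0"
    and atomless: "\<And>x. emeasure \<mu> {x} = 0"
    and singular: "\<exists>A \<in> sets borel. nmeas A = 0 \<and> emeasure \<mu> (UNIV - A) = 0"
    and supp: "emeasure \<mu> (UNIV - E) = 0"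
    and entE: "finite_entropy E"
    and eps: "\<epsilon> > 0" and del: "\<delta> > 0"
  shows "\<exists>a l. 0 < l \<and> l < 2 * pi \<and>
           0 < measure \<mu> (open_arc a l) \<and> measure \<mu> (open_arc a l) < \<delta> \<and>
           local_entropy (open_arc a l) E < ennreal (\<epsilon> * measure \<mu> (open_arc a l))"
proof -
  have Ec: "closed E" "E \<subseteq> circle" "local_entropy circle E < \<top>"
    using entE by (auto simp: finite_entropy_def)
  have sE: "UNIV - E \<in> sets \<mu>" using Ec(1) sets_mu by auto
  have "emeasure \<mu> (UNIV - circle) \<le> emeasure \<mu> (UNIV - E)"
    using Ec(2) sE by (intro emeasure_mono) auto
  then have null: "emeasure \<mu> (UNIV - circle) = 0" using supp by simp
  interpret msetup \<mu> by (rule msetup.intro[OF sets_mu finite null atomless])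
  interpret msetup2 \<mu> E by unfold_locales (rule Ec(2), rule Ec(1), rule supp)
  interpret fm: finite_measure \<mu> by (rule finite)
  have "measure \<mu> UNIV > 0"
    using nontrivial fm.emeasure_eq_measure[of UNIV] by simp
  from main[OF Ec(3) this eps del] show ?thesis .
qed

end
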